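(* Fix $\alpha>\beta>0$ and $\lambda_0,\lambda_1>0$, and let $\rho_0$ be the invariant density described in the context. Then: (1) If $\lambda_0<\alpha+\beta$, then $\rho_0$ is unbounded in every neighborhood of $(0,0)$. (2) If $\lambda_1<\beta$, then for every $x\in\partial\Gamma_0$, $\rho_0$ is unbounded in every neighborhood of $x$; consequently $\rho_0$ is also unbounded in every neighborhood of $(0,0)$ and of $(1,1)$.
   Context: For $i\in\{0,1\}$ let $u_i(x_1,x_2)=(-\alpha(x_1-i),-\beta(x_2-i))$, with flow $\Phi_i^t(x_1,x_2)=(i+(x_1-i)e^{-\alpha t},\, i+(x_2-i)e^{-\beta t})$, $t\in\mathbb{R}$. Let $(I_t)$ be a continuous-time Markov chain on $\{0,1\}$ jumping $0\to1$ at rate $\lambda_0$ and $1\to0$ at rate $\lambda_1$, and let $X_t$ solve $\frac{d}{dt}X_t=u_{I_t}(X_t)$. The Markov process $(X_t,I_t)$ on $\mathbb{R}^2\times\{0,1\}$ has a unique invariant probability measure $\mu$, absolutely continuous with respect to Lebesgue measure times counting measure; for $i\in\{0,1\}$, $\rho_i\in L^1(\mathbb{R}^2)$ denotes the Lebesgue density of the marginal $\mu(\cdot\times\{i\})$ (the invariant densities). Let $\Gamma=\{(x_1,x_2): 0\le x_2\le1,\ x_2^{\alpha/\beta}\le x_1\le 1-(1-x_2)^{\alpha/\beta}\}$ (the support of these marginals) and $\partial\Gamma_0=\{\Phi_0^t(1,1): t>0\}$, the forward $u_0$-trajectory starting at $(1,1)$. Since $\rho_0$ is defined only up to Lebesgue-null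 sets, "$\rho_0$ is bounded on a set $S$" means some representative of $\rho_0$ is bounded on $S$, and "unbounded in every neighborhood of $x$" means that no neighborhood of $x$ has this property. *)

theory Defs
  imports "HOL-Probability.Probability"
begin

text \<open>Modes are encoded as natural numbers 0 and 1; points of R^2 as pairs of reals.\<close>

definition flow :: "real \<Rightarrow> real \<Rightarrow> nat \<Rightarrow> real \<Rightarrow> real \<times> real \<Rightarrow> real \<times> real" where
  "flow \<alpha> \<beta> i t x = (real i + (fst x - real i) * exp (- \<alpha> * t),
                      real i + (snd x - real i) * exp (- \<beta> * t))"

definition rate :: "real \<Rightarrow> real \<Rightarrow> nat \<Rightarrow> real" where
  "rate l0 l1 i = (if i = 0 then l0 else l1)"

definition mode :: "nat \<Rightarrow> nat \<Rightarrow> nat" where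
  "mode i k = (i + k) mod 2"

text \<open>The process is driven by an i.i.d. sequence e of Exp(1) variables: the k-th holding
  time is e k / rate (mode i k), which is Exp(rate) distributed.\<close>
definition hold :: "real \<Rightarrow> real \<Rightarrow> nat \<Rightarrow> (nat \<Rightarrow> real) \<Rightarrow> nat \<Rightarrow> real" where
  "hold l0 l1 i e k = e k / rate l0 l1 (mode i k)"

definition jump_time :: "real \<Rightarrow> real \<Rightarrow> nat \<Rightarrow> (nat \<Rightarrow> real) \<Rightarrow> nat \<Rightarrow> real" where
  "jump_time l0 l1 i e k = (\<Sum>j<k. hold l0 l1 i e j)"

fun jump_pos :: "real \<Rightarrow> real \<Rightarrow> real \<Rightarrow> real \<Rightarrow> real \<times> real \<Rightarrow> nat \<Rightarrow> (nat \<Rightarrow> real)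
    \<Rightarrow> nat \<Rightarrow> real \<times> real" where
  "jump_pos \<alpha> \<beta> l0 l1 x i e 0 = x"
| "jump_pos \<alpha> \<beta> l0 l1 x i e (Suc k) =
     flow \<alpha> \<beta> (mode i k) (hold l0 l1 i e k) (jump_pos \<alpha> \<beta> l0 l1 x i e k)"

definition pdmp_state :: "real \<Rightarrow> real \<Rightarrow> real \<Rightarrow> real \<Rightarrow> real \<Rightarrow> real \<times> real \<Rightarrow> nat
    \<Rightarrow> (nat \<Rightarrow> real) \<Rightarrow> (real \<times> real) \<times> nat" where
  "pdmp_state \<alpha> \<beta> l0 l1 t x i e =
     (let k = (LEAST k. t < jump_time l0 l1 i e (Suc k))
      in (flow \<alpha> \<beta> (mode i k) (t - jump_time l0 l1 i e k) (jump_pos \<alpha> \<beta> l0 l1 x i e k),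
          mode i k))"

definition exp_seq :: "(nat \<Rightarrow> real) measure" where
  "exp_seq = PiM UNIV (\<lambda>_. density lborel (exponential_density 1))"

definition dens :: "((real \<times> real) \<Rightarrow> real) \<Rightarrow> ((real \<times> real) \<Rightarrow> real) \<Rightarrow> nat
    \<Rightarrow> (real \<times> real) \<Rightarrow> real" where
  "dens \<rho>\<^sub>0 \<rho>\<^sub>1 i = (if i = 0 then \<rho>\<^sub>0 else \<rho>\<^sub>1)"

text \<open>(rho0, rho1) are the Lebesgue densities of the marginals mu(. x {0}), mu(. x {1}) of an
  invariant probability measure mu of the process (X_t, I_t): if the initial state is
  mu-distributed, then so is the state at every time t \<ge> 0.\<close>
definition invariant_densities :: "real \<Rightarrow> real \<Rightarrow> real \<Rightarrow> real \<Rightarrow>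
    ((real \<times> real) \<Rightarrow> real) \<Rightarrow> ((real \<times> real) \<Rightarrow> real) \<Rightarrow> bool" where
  "invariant_densities \<alpha> \<beta> l0 l1 \<rho>\<^sub>0 \<rho>\<^sub>1 \<longleftrightarrow>
     \<rho>\<^sub>0 \<in> borel_measurable lborel \<and> \<rho>\<^sub>1 \<in> borel_measurable lborel \<and>
     (\<forall>x. 0 \<le> \<rho>\<^sub>0 x) \<and> (\<forall>x. 0 \<le> \<rho>\<^sub>1 x) \<and>
     integrable lborel \<rho>\<^sub>0 \<and> integrable lborel \<rho>\<^sub>1 \<and>
     (\<integral>x. \<rho>\<^sub>0 x \<partial>lborel) + (\<integral>x. \<rho>\<^sub>1 x \<partial>lborel) = 1 \<and>
     (\<forall>t\<ge>0. \<forall>A\<in>sets borel. \<forall>i\<in>{0,1}.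
        (\<integral>\<^sup>+x. ennreal (dens \<rho>\<^sub>0 \<rho>\<^sub>1 i x) * indicator A x \<partial>lborel) =
        (\<Sum>j\<in>{0,1}. \<integral>\<^sup>+x. ennreal (dens \<rho>\<^sub>0 \<rho>\<^sub>1 j x) *
            emeasure exp_seq {e \<in> space exp_seq. pdmp_state \<alpha> \<beta> l0 l1 t x j e \<in> A \<times> {i}}
          \<partial>lborel))"

text \<open>f is unbounded (even after modification on a null set) in every neighbourhood of x.\<close>
definition unbounded_near :: "((real \<times> real) \<Rightarrow> real) \<Rightarrow> real \<times> real \<Rightarrow> bool" where
  "unbounded_near f x \<longleftrightarrow>
     (\<forall>U. open U \<longrightarrow> x \<in> U \<longrightarrow> \<not> (\<exists>C. AE y in lborel. y \<in> U \<longrightarrow> \<bar>f y\<bar> \<le> C))"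

definition boundary_Gamma0 :: "real \<Rightarrow> real \<Rightarrow> (real \<times> real) set" where
  "boundary_Gamma0 \<alpha> \<beta> = {flow \<alpha> \<beta> 0 t (1, 1) | t. t > 0}"

end

theory Submission
  imports Defs "HOL-Probability.Probability"
begin

abbreviation "D \<equiv> density lborel (exponential_density (1::real))"

lemma D_prob: "prob_space D"
  by (rule prob_space_exponential_density) simp

lemma sets_D[simp]: "sets D = sets borel" by simp
lemma space_D[simp]: "space D = UNIV" by simp

lemma D_gt: assumes "0 \<le> a" shows "emeasure D {a<..} = ennreal (exp (- a))"
proof -
  interpret prob_space D by (rule D_prob)
  have dist: "distributed D lborel (\<lambda>x. x) (exponential_density 1)"
    unfolding distributed_def
    by (auto simp: distr_id2)
  have "\<P>(x in D. a < x) = exp (- a * 1)"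
    by (rule exponential_distributedD_gt[OF dist assms]) simp
  moreover have "{x \<in> space D. a < x} = {a<..}" by auto
  ultimately show ?thesis by (simp add: emeasure_eq_measure)
qed

lemma D_Ioc: assumes "0 \<le> a" "a \<le> b" shows "emeasure D {a<..b} = ennreal (exp (- a) - exp (- b))"
proof -
  interpret prob_space D by (rule D_prob)
  have "{a<..b} = {a<..} - {b<..}" by auto
  then have "emeasure D {a<..b} = emeasure D {a<..} - emeasure D {b<..}"
    using assms by (simp add: emeasure_Diff)
  then show ?thesis using assms by (simp add: D_gt ennreal_minus)
qed

lemma exp_seq_prob: "prob_space exp_seq"
  unfolding exp_seq_def
  by (intro prob_space_PiM D_prob)

lemma space_exp_seq[simp]: "space exp_seq = UNIV"
  unfolding exp_seq_def by (simp add: space_PiM PiE_UNIV_domain)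

lemma exp_seq_event:
  assumes "finite J" "\<And>j. j \<in> J \<Longrightarrow> X j \<in> sets borel"
  shows "emeasure exp_seq {e \<in> space exp_seq. \<forall>j\<in>J. e j \<in> X j} = (\<Prod>j\<in>J. emeasure D (X j))"
proof -
  have "{e \<in> space exp_seq. \<forall>j\<in>J. e j \<in> X j} = prod_emb UNIV (\<lambda>_. D) J (Pi\<^sub>E J X)"
    unfolding prod_emb_def exp_seq_def by (auto simp: space_PiM PiE_def extensional_def Pi_def restrict_def)
  then show ?thesis
    unfolding exp_seq_def
    using emeasure_PiM_emb[of UNIV "\<lambda>_. D" J X] assms D_prob by simp
qed

lemma comp_meas[measurable]: "(\<lambda>e. e k) \<in> borel_measurable exp_seq"
proof -
  have "(\<lambda>e. e k) \<in> measurable exp_seq D" unfolding exp_seq_def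
    by (rule measurable_component_singleton) simp
  then show ?thesis by (simp cong: measurable_cong_sets)
qed

lemma hold_meas[measurable]: "(\<lambda>e. hold l0 l1 i e k) \<in> borel_measurable exp_seq"
  unfolding hold_def by measurable

lemma jump_time_meas[measurable]: "(\<lambda>e. jump_time l0 l1 i e k) \<in> borel_measurable exp_seq"
  unfolding jump_time_def by measurable

lemma flow_meas[measurable]:
  assumes [measurable]: "f \<in> borel_measurable M" "g \<in> borel_measurable M"
  shows "(\<lambda>e. flow a b i (f e) (g e)) \<in> borel_measurable M"
proof -
  have [measurable]: "g \<in> M \<rightarrow>\<^sub>M borel \<Otimes>\<^sub>M borel" using assms(2) by (simp add: borel_prod)
  show ?thesis unfolding flow_def by measurable
qed

lemma jump_pos_meas[measurable]: "(\<lambda>e. jump_pos a b l0 l1 x i e k) \<in> borel_measurable exp_seq"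
  by (induction k) auto

lemma pdmp_meas: "(\<lambda>e. pdmp_state a b l0 l1 t x i e) \<in> borel_measurable exp_seq"
  unfolding pdmp_state_def Let_def
proof (rule measurable_compose_countable[where f = "\<lambda>k e. (flow a b (mode i k) (t - jump_time l0 l1 i e k) (jump_pos a b l0 l1 x i e k), mode i k)"])
  show "(\<lambda>e. LEAST k. t < jump_time l0 l1 i e (Suc k)) \<in> measurable exp_seq (count_space UNIV)"
    by measurable
qed measurable

lemma event_sets:
  assumes "A \<in> sets borel"
  shows "{e \<in> space exp_seq. pdmp_state a b l0 l1 t x j e \<in> A \<times> {i}} \<in> sets exp_seq"
proof -
  have "A \<times> {i} \<in> sets (borel :: ((real \<times> real) \<times> nat) measure)"
    using assms by (simp add: borel_prod[symmetric])
  then have "pdmp_state a b l0 l1 t x j -` (A \<times> {i}) \<inter> space exp_seq \<in> sets exp_seq"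
    using pdmp_meas[of a b l0 l1 t x j] by (rule measurable_sets[rotated])
  moreover have "{e \<in> space exp_seq. pdmp_state a b l0 l1 t x j e \<in> A \<times> {i}} = pdmp_state a b l0 l1 t x j -` (A \<times> {i}) \<inter> space exp_seq" by auto
  ultimately show ?thesis by simp
qed

lemma pdmp_state_eq:
  assumes "\<forall>m<k. jump_time l0 l1 i e (Suc m) \<le> t" "t < jump_time l0 l1 i e (Suc k)"
  shows "pdmp_state a b l0 l1 t x i e =
    (flow a b (mode i k) (t - jump_time l0 l1 i e k) (jump_pos a b l0 l1 x i e k), mode i k)"
proof -
  have "(LEAST k. t < jump_time l0 l1 i e (Suc k)) = k"
    by (rule Least_equality) (use assms in \<open>auto simp: not_less[symmetric]\<close>)
  then show ?thesis unfolding pdmp_state_def Let_def by simp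
qed

lemma inv_parts:
  assumes "invariant_densities a b l0 l1 \<rho>\<^sub>0 \<rho>\<^sub>1"
  shows "\<rho>\<^sub>0 \<in> borel_measurable lborel" "\<rho>\<^sub>1 \<in> borel_measurable lborel"
    "\<forall>x. 0 \<le> \<rho>\<^sub>0 x" "\<forall>x. 0 \<le> \<rho>\<^sub>1 x" "integrable lborel \<rho>\<^sub>0" "integrable lborel \<rho>\<^sub>1"
    "(\<integral>x. \<rho>\<^sub>0 x \<partial>lborel) + (\<integral>x. \<rho>\<^sub>1 x \<partial>lborel) = 1"
    "(\<forall>t\<ge>0. \<forall>A\<in>sets borel. \<forall>i\<in>{0,1}.
        (\<integral>\<^sup>+x. ennreal (dens \<rho>\<^sub>0 \<rho>\<^sub>1 i x) * indicator A x \<partial>lborel) =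
        (\<Sum>j\<in>{0,1}. \<integral>\<^sup>+x. ennreal (dens \<rho>\<^sub>0 \<rho>\<^sub>1 j x) *
            emeasure exp_seq {e \<in> space exp_seq. pdmp_state a b l0 l1 t x j e \<in> A \<times> {i}}
          \<partial>lborel))"
  using assms unfolding invariant_densities_def
  apply -
  apply (erule conjE, assumption)
  apply (erule conjE, erule conjE, assumption)
  apply (erule conjE, erule conjE, erule conjE, assumption)
  apply (erule conjE, erule conjE, erule conjE, erule conjE, assumption)
  apply (erule conjE, erule conjE, erule conjE, erule conjE, erule conjE, assumption)
  apply (erule conjE, erule conjE, erule conjE, erule conjE, erule conjE, erule conjE, assumption)
  apply (erule conjE, erule conjE, erule conjE, erule conjE, erule conjE, erule conjE, erule conjE, assumption)
  apply (erule conjE, erule conjE, erule conjE, erule conjE, erule conjE, erule conjE, erule conjE, assumption)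
  done

lemma inv_eq:
  assumes "invariant_densities a b l0 l1 \<rho>\<^sub>0 \<rho>\<^sub>1" "0 \<le> t" "A \<in> sets borel" "i \<in> {0,1}"
  shows "(\<integral>\<^sup>+x. ennreal (dens \<rho>\<^sub>0 \<rho>\<^sub>1 i x) * indicator A x \<partial>lborel) =
        (\<Sum>j\<in>{0,1}. \<integral>\<^sup>+x. ennreal (dens \<rho>\<^sub>0 \<rho>\<^sub>1 j x) *
            emeasure exp_seq {e \<in> space exp_seq. pdmp_state a b l0 l1 t x j e \<in> A \<times> {i}}
          \<partial>lborel)"
proof -
  note h = inv_parts(8)[OF assms(1)]
  show ?thesis using h[rule_format, OF assms(2) assms(3) assms(4)] .
qed

lemma alg_aux: "(c::ennreal) * ((p+q)*I) = p*(c*I) + q*(c*I)"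
  by (simp add: algebra_simps)

lemma ind_le: "(x \<in> S \<Longrightarrow> a \<le> b) \<Longrightarrow> a * indicator S x \<le> (b::ennreal)"
  by (cases "x \<in> S") auto

lemma lower_bound:
  assumes inv: "invariant_densities a b l0 l1 \<rho>\<^sub>0 \<rho>\<^sub>1" and t: "0 \<le> t" and A: "A \<in> sets borel"
    and Bx: "Bx \<in> sets borel" and c: "0 \<le> c"
    and P: "\<And>x j. x \<in> Bx \<Longrightarrow> j \<in> {0,1} \<Longrightarrow>
       ennreal c \<le> emeasure exp_seq {e\<in>space exp_seq. pdmp_state a b l0 l1 t x j e \<in> A \<times> {0}}"
  shows "ennreal c * (\<integral>\<^sup>+x. ennreal (\<rho>\<^sub>0 x + \<rho>\<^sub>1 x) * indicator Bx x \<partial>lborel)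
           \<le> (\<integral>\<^sup>+x. ennreal (\<rho>\<^sub>0 x) * indicator A x \<partial>lborel)"
proof -
  note invd = inv[unfolded invariant_densities_def]
  note m0[measurable] = inv_parts(1)[OF inv] and m1[measurable] = inv_parts(2)[OF inv]
    and n0 = inv_parts(3)[OF inv, rule_format] and n1 = inv_parts(4)[OF inv, rule_format]
  have eq: "(\<integral>\<^sup>+x. ennreal (\<rho>\<^sub>0 x) * indicator A x \<partial>lborel) =
     (\<Sum>j\<in>{0,1}. \<integral>\<^sup>+x. ennreal (dens \<rho>\<^sub>0 \<rho>\<^sub>1 j x) *
            emeasure exp_seq {e \<in> space exp_seq. pdmp_state a b l0 l1 t x j e \<in> A \<times> {0}} \<partial>lborel)"
    using inv_eq[OF inv t A, of 0] by (simp only: dens_def if_True insert_iff simp_thms)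
  have le: "(\<integral>\<^sup>+x. ennreal (dens \<rho>\<^sub>0 \<rho>\<^sub>1 j x) * (ennreal c * indicator Bx x) \<partial>lborel) \<le>
      (\<integral>\<^sup>+x. ennreal (dens \<rho>\<^sub>0 \<rho>\<^sub>1 j x) *
            emeasure exp_seq {e \<in> space exp_seq. pdmp_state a b l0 l1 t x j e \<in> A \<times> {0}} \<partial>lborel)"
    if "j \<in> {0,1}" for j
  proof (intro nn_integral_mono mult_left_mono)
    fix x show "ennreal c * indicator Bx x \<le> emeasure exp_seq {e \<in> space exp_seq. pdmp_state a b l0 l1 t x j e \<in> A \<times> {0}}"
      by (rule ind_le, rule P[OF _ that])
  qed simp
  have pw: "ennreal c * (ennreal (\<rho>\<^sub>0 x + \<rho>\<^sub>1 x) * indicator Bx x) = ennreal (\<rho>\<^sub>0 x) * (ennreal c * indicator Bx x) + ennreal (\<rho>\<^sub>1 x) * (ennreal c * indicator Bx x)" for x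
    using n0[of x] n1[of x] by (simp only: ennreal_plus alg_aux)
  have "ennreal c * (\<integral>\<^sup>+x. ennreal (\<rho>\<^sub>0 x + \<rho>\<^sub>1 x) * indicator Bx x \<partial>lborel)
      = (\<integral>\<^sup>+x. ennreal c * (ennreal (\<rho>\<^sub>0 x + \<rho>\<^sub>1 x) * indicator Bx x) \<partial>lborel)"
    by (rule nn_integral_cmult[symmetric]) (use Bx in measurable)
  also have "\<dots> = (\<integral>\<^sup>+x. ennreal (\<rho>\<^sub>0 x) * (ennreal c * indicator Bx x) + ennreal (\<rho>\<^sub>1 x) * (ennreal c * indicator Bx x) \<partial>lborel)"
    by (simp only: pw)
  also have "\<dots> = (\<integral>\<^sup>+x. ennreal (\<rho>\<^sub>0 x) * (ennreal c * indicator Bx x) \<partial>lborel) + (\<integral>\<^sup>+x. ennreal (\<rho>\<^sub>1 x) * (ennreal c * indicator Bx x) \<partial>lborel)"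
    by (rule nn_integral_add; use Bx in measurable)
  also have "\<dots> = (\<Sum>j\<in>{0,1}. \<integral>\<^sup>+x. ennreal (dens \<rho>\<^sub>0 \<rho>\<^sub>1 j x) * (ennreal c * indicator Bx x) \<partial>lborel)"
    by (simp add: dens_def)
  also have "\<dots> \<le> (\<Sum>j\<in>{0,1}. \<integral>\<^sup>+x. ennreal (dens \<rho>\<^sub>0 \<rho>\<^sub>1 j x) *
            emeasure exp_seq {e \<in> space exp_seq. pdmp_state a b l0 l1 t x j e \<in> A \<times> {0}} \<partial>lborel)"
    by (intro sum_mono le) 
  finally show ?thesis using eq by (simp only:)
qed

lemma upper_bound:
  assumes AE: "AE y in lborel. y \<in> U \<longrightarrow> \<bar>f y\<bar> \<le> C" and sub: "A \<subseteq> U" "A \<subseteq> B"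
    and B: "B \<in> sets borel" and C: "0 \<le> C"
  shows "(\<integral>\<^sup>+x. ennreal (f x) * indicator A x \<partial>lborel) \<le> ennreal C * emeasure lborel B"
proof -
  have "(\<integral>\<^sup>+x. ennreal (f x) * indicator A x \<partial>lborel) \<le> (\<integral>\<^sup>+x. ennreal C * indicator B x \<partial>lborel)"
  proof (rule nn_integral_mono_AE)
    show "AE x in lborel. ennreal (f x) * indicator A x \<le> ennreal C * indicator B x"
      using AE
    proof eventually_elim
      case (elim x)
      then show ?case using sub C by (auto simp: indicator_def intro: ennreal_leI)
    qed
  qed
  also have "\<dots> = ennreal C * emeasure lborel B" by (rule nn_integral_cmult_indicator) (use B in simp)
  finally show ?thesis .
qed

definition sbox :: "real \<Rightarrow> (real \<times> real) set" where
  "sbox R = {-R..R} \<times> {-R..R}"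

lemma box_sets[measurable]: "sbox R \<in> sets borel"
proof -
  have "{-R..R} \<times> {-R..R} \<in> sets (borel \<Otimes>\<^sub>M (borel :: real measure))" by (rule pair_measureI) auto
  then show ?thesis unfolding sbox_def by (simp only: borel_prod)
qed

lemma mem_box: "x \<in> sbox R \<longleftrightarrow> \<bar>fst x\<bar> \<le> R \<and> \<bar>snd x\<bar> \<le> R"
  unfolding sbox_def by (cases x) auto

lemma total_one:
  assumes inv: "invariant_densities a b l0 l1 \<rho>\<^sub>0 \<rho>\<^sub>1"
  shows "(\<integral>\<^sup>+x. ennreal (\<rho>\<^sub>0 x + \<rho>\<^sub>1 x) \<partial>lborel) = 1"
proof -
  have i: "integrable lborel (\<lambda>x. \<rho>\<^sub>0 x + \<rho>\<^sub>1 x)"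
    using inv_parts(5,6)[OF inv] by (rule Bochner_Integration.integrable_add)
  have "(\<integral>\<^sup>+x. ennreal (\<rho>\<^sub>0 x + \<rho>\<^sub>1 x) \<partial>lborel) = ennreal (\<integral>x. \<rho>\<^sub>0 x + \<rho>\<^sub>1 x \<partial>lborel)"
    using i inv_parts(3,4)[OF inv] by (intro nn_integral_eq_integral) auto
  also have "(\<integral>x. \<rho>\<^sub>0 x + \<rho>\<^sub>1 x \<partial>lborel) = 1"
    using inv_parts(5,6,7)[OF inv] by (simp add: Bochner_Integration.integral_add)
  finally show ?thesis by simp
qed

lemma pos_mass:
  assumes inv: "invariant_densities a b l0 l1 \<rho>\<^sub>0 \<rho>\<^sub>1"
  shows "\<exists>R\<ge>1. 0 < (\<integral>\<^sup>+x. ennreal (\<rho>\<^sub>0 x + \<rho>\<^sub>1 x) * indicator (sbox R) x \<partial>lborel)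
          \<and> (\<integral>\<^sup>+x. ennreal (\<rho>\<^sub>0 x + \<rho>\<^sub>1 x) * indicator (sbox R) x \<partial>lborel) \<le> 1"
proof -
  note m0[measurable] = inv_parts(1)[OF inv] and m1[measurable] = inv_parts(2)[OF inv]
  define f where "f n x = ennreal (\<rho>\<^sub>0 x + \<rho>\<^sub>1 x) * indicator (sbox (real (Suc n))) x" for n x
  have inc: "incseq f"
  proof (rule incseq_SucI, rule le_funI)
    fix n x
    have "sbox (real (Suc n)) \<subseteq> sbox (real (Suc (Suc n)))" unfolding sbox_def by auto
    then show "f n x \<le> f (Suc n) x" unfolding f_def
      by (intro mult_left_mono) (auto simp: indicator_def)
  qed
  have sup: "(SUP n. f n x) = ennreal (\<rho>\<^sub>0 x + \<rho>\<^sub>1 x)" for x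
  proof (rule antisym)
    show "(SUP n. f n x) \<le> ennreal (\<rho>\<^sub>0 x + \<rho>\<^sub>1 x)"
      by (rule SUP_least) (auto simp: f_def indicator_def)
    obtain n :: nat where n: "max \<bar>fst x\<bar> \<bar>snd x\<bar> \<le> real n" using real_arch_simple by blast
    then have "x \<in> sbox (real (Suc n))" by (auto simp: mem_box)
    then have "f n x = ennreal (\<rho>\<^sub>0 x + \<rho>\<^sub>1 x)" by (simp add: f_def)
    then show "ennreal (\<rho>\<^sub>0 x + \<rho>\<^sub>1 x) \<le> (SUP n. f n x)"
      by (metis SUP_upper UNIV_I)
  qed
  have "(SUP n. integral\<^sup>N lborel (f n)) = (\<integral>\<^sup>+ x. (SUP n. f n x) \<partial>lborel)"
    by (rule nn_integral_monotone_convergence_SUP[symmetric, OF inc]) (unfold f_def, measurable)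
  also have "\<dots> = 1" using total_one[OF inv] by (simp add: sup)
  finally have "0 < (SUP n. integral\<^sup>N lborel (f n))" by simp
  then obtain n where n: "0 < integral\<^sup>N lborel (f n)" by (auto simp: less_SUP_iff)
  have "integral\<^sup>N lborel (f n) \<le> (\<integral>\<^sup>+ x. ennreal (\<rho>\<^sub>0 x + \<rho>\<^sub>1 x) \<partial>lborel)"
    by (intro nn_integral_mono) (auto simp: f_def indicator_def)
  then have "integral\<^sup>N lborel (f n) \<le> 1" using total_one[OF inv] by simp
  then show ?thesis using n unfolding f_def
    by (intro exI[of _ "real (Suc n)"]) auto
qed

lemma emeasure_box2: assumes "0 \<le> p" "0 \<le> q"
  shows "emeasure lborel ({-p..p} \<times> {-q..q}) = ennreal (2*p * (2*q))"
proof -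
  have "emeasure lborel ({-p..p} \<times> {-q..q}) = emeasure (lborel \<Otimes>\<^sub>M lborel) ({-p..p} \<times> {-q..q})"
    by (simp add: lborel_prod)
  also have "\<dots> = emeasure lborel {-p..p} * emeasure lborel {-q..q}"
    by (rule lborel.emeasure_pair_measure_Times) auto
  also have "\<dots> = ennreal (2*p * (2*q))" using assms by (simp add: ennreal_mult[symmetric])
  finally show ?thesis .
qed

definition strip :: "real \<Rightarrow> real \<Rightarrow> (real \<times> real) set" where
  "strip g w = {y. 0 \<le> fst y \<and> fst y \<le> 2 \<and> \<bar>snd y - fst y powr g\<bar> \<le> w}"

lemma strip_sets[measurable]: "strip g w \<in> sets borel"
proof -
  have "strip g w = {y \<in> space (borel \<Otimes>\<^sub>M borel). 0 \<le> fst y \<and> fst y \<le> 2 \<and> \<bar>snd y - fst y powr g\<bar> \<le> (w::real)}"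
    unfolding strip_def by (simp add: space_pair_measure)
  also have "\<dots> \<in> sets (borel \<Otimes>\<^sub>M borel)" by measurable
  finally have "strip g w \<in> sets (borel \<Otimes>\<^sub>M borel)" .
  then show ?thesis by (simp only: borel_prod)
qed

lemma emeasure_strip: assumes "0 \<le> w"
  shows "emeasure lborel (strip g w) \<le> ennreal (4 * w)"
proof -
  have "emeasure lborel (strip g w) = emeasure (lborel \<Otimes>\<^sub>M lborel) (strip g w)"
    by (simp add: lborel_prod)
  also have "\<dots> = (\<integral>\<^sup>+x. emeasure lborel (Pair x -` strip g w) \<partial>lborel)"
    by (rule lborel.emeasure_pair_measure_alt) (simp only: lborel_prod sets_lborel strip_sets)
  also have "\<dots> \<le> (\<integral>\<^sup>+x. ennreal (2 * w) * indicator {0..2::real} x \<partial>lborel)"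
  proof (rule nn_integral_mono)
    fix x :: real
    show "emeasure lborel (Pair x -` strip g w) \<le> ennreal (2 * w) * indicator {0..2::real} x"
    proof (cases "x \<in> {0..2}")
      case True
      have "Pair x -` strip g w = {x powr g - w .. x powr g + w}"
        using True unfolding strip_def by auto
      then show ?thesis using True assms by simp
    next
      case False
      have "Pair x -` strip g w = {}"
        using False unfolding strip_def by auto
      then show ?thesis by simp
    qed
  qed
  also have "\<dots> = ennreal (2 * w) * 2"
    by (subst nn_integral_cmult_indicator) auto
  also have "\<dots> = ennreal (4 * w)" using assms by (simp add: ennreal_mult[symmetric] ennreal_numeral[symmetric] del: ennreal_numeral)
  finally show ?thesis .
qed

lemma dist_le_sum: "dist (x1::real, x2::real) (y1, y2) \<le> \<bar>x1 - y1\<bar> + \<bar>x2 - y2\<bar>"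
proof -
  have "dist (x1, x2) (y1, y2) = norm (x1 - y1, x2 - y2)" by (simp add: dist_norm)
  also have "\<dots> \<le> norm (x1 - y1) + norm (x2 - y2)" by (rule norm_Pair_le)
  finally show ?thesis by simp
qed

lemma flow_simps: "flow a b i t x = (real i + (fst x - real i) * exp (- a * t), real i + (snd x - real i) * exp (- b * t))"
  by (simp add: flow_def)

lemma powr_close: fixes x g :: real assumes "0 < x" "0 \<le> g" "g \<le> 1" shows "\<bar>1 - x powr g\<bar> \<le> \<bar>1 - x\<bar>"
proof (cases "1 \<le> x")
  case True
  have "1 \<le> x powr g" by (rule ge_one_powr_ge_zero) (use True assms in auto)
  moreover have "x powr g \<le> x powr 1" using True assms by (intro powr_mono) auto
  ultimately show ?thesis using assms by simp
next
  case False
  have "x powr g \<le> 1" using powr_mono2[of g x 1] False assms by simp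
  moreover have "x powr 1 \<le> x powr g" using False assms by (intro powr_mono') auto
  ultimately show ?thesis using assms False by simp
qed

lemma contract1:
  fixes w R th :: real
  assumes "\<bar>w\<bar> \<le> R" "1 \<le> R" "0 \<le> th" "th \<le> 1"
  shows "\<bar>1 + (w - 1) * th\<bar> \<le> R"
proof -
  have e: "1 + (w - 1) * th = (1 - th) + th * w" by (simp add: algebra_simps)
  have "\<bar>(1 - th) + th * w\<bar> \<le> \<bar>1 - th\<bar> + \<bar>th * w\<bar>" by (rule abs_triangle_ineq)
  also have "\<dots> = (1 - th) + th * \<bar>w\<bar>" using assms by (simp add: abs_mult)
  also have "th * \<bar>w\<bar> \<le> th * R" using assms by (intro mult_left_mono) auto
  also have "(1 - th) \<le> (1 - th) * R" using assms mult_left_mono[of 1 R "1 - th"] by simp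
  finally have "\<bar>(1 - th) + th * w\<bar> \<le> (1 - th) * R + th * R" by simp
  then show ?thesis using e by (simp add: algebra_simps)
qed

lemma exp_diff_le: fixes c t0 s :: real assumes "0 \<le> c" "t0 \<le> s" "0 \<le> t0" shows "\<bar>exp (- c * s) - exp (- c * t0)\<bar> \<le> c * (s - t0)"
proof -
  have 1: "exp (- c * s) \<le> exp (- c * t0)" using mult_left_mono[OF assms(2) assms(1)] by simp
  have 2: "exp (- c * t0) - exp (- c * s) = exp (- c * t0) * (1 - exp (- (c * (s - t0))))"
    by (simp add: algebra_simps exp_add[symmetric])
  have 3: "1 - exp (- (c * (s - t0))) \<le> c * (s - t0)"
    using exp_ge_add_one_self[of "- (c * (s - t0))"] by simp
  have 4: "0 \<le> 1 - exp (- (c * (s - t0)))" using assms by simp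
  have 5: "exp (- c * t0) \<le> 1" using assms by simp
  have "exp (- c * t0) * (1 - exp (- (c * (s - t0)))) \<le> 1 - exp (- (c * (s - t0)))"
    by (rule mult_left_le_one_le[OF 4 _ 5]) simp
  then show ?thesis using 1 2 3 by linarith
qed

lemma abs_split_bound:
  fixes e1 e A :: real assumes "0 \<le> e"
  shows "\<bar>e1 - (1 - A) * e\<bar> \<le> \<bar>A\<bar> * e + \<bar>e - e1\<bar>"
proof -
  have "e1 - (1 - A) * e = A * e + (e1 - e)" by (simp add: algebra_simps)
  then have "\<bar>e1 - (1 - A) * e\<bar> \<le> \<bar>A * e\<bar> + \<bar>e1 - e\<bar>" using abs_triangle_ineq by metis
  then show ?thesis using assms by (simp add: abs_mult abs_minus_commute)
qed

lemma geom2: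
  fixes a b R S dl t0 sg d eps :: real and w :: "real \<times> real"
  assumes ab: "0 < b" "b < a" and R: "1 \<le> R" and w: "\<bar>fst w\<bar> \<le> R" "\<bar>snd w\<bar> \<le> R"
    and d: "S - dl \<le> d" "0 \<le> S - dl"
    and sg: "t0 \<le> sg" "sg \<le> t0 + dl" "0 \<le> t0"
    and eta: "(R + 1) * exp (- b * (S - dl)) \<le> 1/2"
    and eta2: "(R + 1) * exp (- b * (S - dl)) < eps / 4" and dl: "a * dl \<le> eps / 4"
  shows "flow a b 0 sg (flow a b 1 d w) \<in> strip (b / a) (2 * ((R + 1) * exp (- b * (S - dl))))
           \<inter> ball (exp (- a * t0), exp (- b * t0)) eps"
proof -
  define eta where "eta = (R + 1) * exp (- b * (S - dl))"
  define A where "A = (1 - fst w) * exp (- a * d)"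
  define B where "B = (1 - snd w) * exp (- b * d)"
  have bd: "b * (S - dl) \<le> b * d" using ab d by (intro mult_left_mono) auto
  have bd2: "b * d \<le> a * d" using ab d by (intro mult_right_mono) auto
  have ed: "exp (- a * d) \<le> exp (- b * (S - dl))" using bd bd2 by simp
  have ed2: "exp (- b * d) \<le> exp (- b * (S - dl))" using bd by simp
  have w1: "\<bar>1 - fst w\<bar> \<le> R + 1" and w2: "\<bar>1 - snd w\<bar> \<le> R + 1" using w by auto
  have A: "\<bar>A\<bar> \<le> eta" unfolding A_def eta_def abs_mult
    using w1 ed R by (intro mult_mono) auto
  have B: "\<bar>B\<bar> \<le> eta" unfolding B_def eta_def abs_mult
    using w2 ed2 R by (intro mult_mono) auto
  have y: "flow a b 0 sg (flow a b 1 d w) = ((1 - A) * exp (- a * sg), (1 - B) * exp (- b * sg))"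
    by (simp add: flow_simps A_def B_def algebra_simps)
  have A2: "\<bar>A\<bar> \<le> 1/2" using A eta eta_def by simp
  have pos: "0 < 1 - A" using A2 by simp
  have g: "0 \<le> b / a" "b / a \<le> 1" using ab by auto
  have pw: "((1 - A) * exp (- a * sg)) powr (b / a) = (1 - A) powr (b / a) * exp (- b * sg)"
  proof -
    have "((1 - A) * exp (- a * sg)) powr (b / a) = (1 - A) powr (b / a) * exp (- a * sg) powr (b / a)"
      using pos by (simp add: powr_mult)
    also have "exp (- a * sg) powr (b / a) = exp (- b * sg)"
      using ab by (simp add: powr_def)
    finally show ?thesis .
  qed
  have e1: "exp (- b * sg) \<le> 1" using ab sg by simp
  have strip: "\<bar>(1 - B) * exp (- b * sg) - ((1 - A) * exp (- a * sg)) powr (b / a)\<bar> \<le> 2 * eta"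
  proof -
    have "\<bar>(1 - B) * exp (- b * sg) - ((1 - A) * exp (- a * sg)) powr (b / a)\<bar>
        = exp (- b * sg) * \<bar>(1 - B) - (1 - A) powr (b / a)\<bar>"
    proof -
      have "(1 - B) * exp (- b * sg) - (1 - A) powr (b / a) * exp (- b * sg) = exp (- b * sg) * ((1 - B) - (1 - A) powr (b / a))"
        by (simp add: algebra_simps)
      then show ?thesis unfolding pw by (simp add: abs_mult)
    qed
    also have "\<dots> \<le> 1 * \<bar>(1 - B) - (1 - A) powr (b / a)\<bar>"
      using e1 by (intro mult_right_mono) auto
    also have "\<dots> \<le> \<bar>B\<bar> + \<bar>1 - (1 - A) powr (b / a)\<bar>" by simp
    also have "\<bar>1 - (1 - A) powr (b / a)\<bar> \<le> \<bar>1 - (1 - A)\<bar>"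
      by (rule powr_close[OF pos g])
    finally show ?thesis using A B by simp
  qed
  have ea: "exp (- a * sg) \<le> 1" using ab sg by simp
  have y1: "0 \<le> (1 - A) * exp (- a * sg)" "(1 - A) * exp (- a * sg) \<le> 2"
  proof -
    show "0 \<le> (1 - A) * exp (- a * sg)" using pos by simp
    have "1 - A \<le> 2" using A2 by simp
    then have "(1 - A) * exp (- a * sg) \<le> 2 * 1"
      using pos ea by (intro mult_mono) auto
    then show "(1 - A) * exp (- a * sg) \<le> 2" by simp
  qed
  have d1: "\<bar>exp (- a * t0) - (1 - A) * exp (- a * sg)\<bar> \<le> eta + a * dl"
  proof -
    have "\<bar>exp (- a * t0) - (1 - A) * exp (- a * sg)\<bar> \<le> \<bar>A\<bar> * exp (- a * sg) + \<bar>exp (- a * sg) - exp (- a * t0)\<bar>"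
      by (rule abs_split_bound) simp
    also have "\<dots> \<le> eta * 1 + a * (sg - t0)"
      using A ea ab sg exp_diff_le[of a t0 sg] by (intro add_mono mult_mono) auto
    also have "a * (sg - t0) \<le> a * dl" using ab sg by (intro mult_left_mono) auto
    finally show ?thesis by simp
  qed
  have d2: "\<bar>exp (- b * t0) - (1 - B) * exp (- b * sg)\<bar> \<le> eta + a * dl"
  proof -
    have "\<bar>exp (- b * t0) - (1 - B) * exp (- b * sg)\<bar> \<le> \<bar>B\<bar> * exp (- b * sg) + \<bar>exp (- b * sg) - exp (- b * t0)\<bar>"
      by (rule abs_split_bound) simp
    also have "\<dots> \<le> eta * 1 + b * (sg - t0)"
      using B e1 ab sg exp_diff_le[of b t0 sg] by (intro add_mono mult_mono) auto
    also have "b * (sg - t0) \<le> a * (sg - t0)" using ab sg by (intro mult_right_mono) auto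
    also have "a * (sg - t0) \<le> a * dl" using ab sg by (intro mult_left_mono) auto
    finally show ?thesis by simp
  qed
  have "dist (exp (- a * t0), exp (- b * t0)) ((1 - A) * exp (- a * sg), (1 - B) * exp (- b * sg)) < eps"
    using dist_le_sum[of "exp (- a * t0)" "exp (- b * t0)" "(1 - A) * exp (- a * sg)" "(1 - B) * exp (- b * sg)"]
      d1 d2 eta2 dl unfolding eta_def by linarith
  then show ?thesis unfolding y eta_def[symmetric] strip_def
    using strip y1 by (simp add: mem_ball)
qed

lemma mode_simps[simp]: "mode 0 0 = 0" "mode 1 0 = 1" "mode 1 1 = 0" "mode 0 1 = 1" "mode 0 2 = 0"
  by (simp_all add: mode_def)

lemma rate_simps[simp]: "rate l0 l1 0 = l0" "rate l0 l1 1 = l1" "rate l0 l1 (Suc 0) = l1"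
  by (simp_all add: rate_def)

lemma mode_simps2[simp]: "mode (Suc 0) 0 = 1" "mode (Suc 0) (Suc 0) = 0" "mode 0 (Suc 0) = 1" "mode 0 (Suc (Suc 0)) = 0"
  by (simp_all add: mode_def)

lemma jump_time_0[simp]: "jump_time l0 l1 i e 0 = 0"
  by (simp add: jump_time_def)

lemma jump_time_Suc: "jump_time l0 l1 i e (Suc k) = jump_time l0 l1 i e k + hold l0 l1 i e k"
  by (simp add: jump_time_def)

lemma event_lb:
  assumes "A \<in> sets borel" "E \<subseteq> {e \<in> space exp_seq. pdmp_state a b l0 l1 t x j e \<in> A \<times> {i}}"
  shows "emeasure exp_seq E \<le> emeasure exp_seq {e \<in> space exp_seq. pdmp_state a b l0 l1 t x j e \<in> A \<times> {i}}"
  by (rule emeasure_mono[OF assms(2) event_sets[OF assms(1)]])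

definition A1 :: "real \<Rightarrow> real \<Rightarrow> real \<Rightarrow> real \<Rightarrow> real \<Rightarrow> (real \<times> real) set" where
  "A1 a b R T eps = ({- (R * exp (- a * T)) .. R * exp (- a * T)} \<times> {- (R * exp (- b * T)) .. R * exp (- b * T)})
      \<inter> ball (0, 0) eps"

lemma A1_sets: "A1 a b R T eps \<in> sets borel"
proof -
  have "{- (R * exp (- a * T)) .. R * exp (- a * T)} \<times> {- (R * exp (- b * T)) .. R * exp (- b * T)}
     \<in> sets (borel \<Otimes>\<^sub>M (borel :: real measure))" by (rule pair_measureI) auto
  then have "{- (R * exp (- a * T)) .. R * exp (- a * T)} \<times> {- (R * exp (- b * T)) .. R * exp (- b * T)}
     \<in> sets borel" by (simp only: borel_prod)
  then show ?thesis unfolding A1_def by (intro sets.Int) auto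
qed

lemma geom1:
  fixes a b R T s eps :: real and y :: "real \<times> real"
  assumes ab: "0 < b" "b < a" and y: "\<bar>fst y\<bar> \<le> R" "\<bar>snd y\<bar> \<le> R" and T: "0 \<le> T" "T \<le> s"
    and eps: "2 * R * exp (- b * T) < eps"
  shows "flow a b 0 s y \<in> A1 a b R T eps"
proof -
  have R: "0 \<le> R" using y by linarith
  have e1: "exp (- a * s) \<le> exp (- a * T)" using ab T mult_left_mono[of T s a] by simp
  have e2: "exp (- b * s) \<le> exp (- b * T)" using ab T mult_left_mono[of T s b] by simp
  have e3: "exp (- a * T) \<le> exp (- b * T)" using ab T mult_right_mono[of b a T] by simp
  have c1: "\<bar>fst y * exp (- a * s)\<bar> \<le> R * exp (- a * T)"
    unfolding abs_mult using y e1 R by (intro mult_mono) auto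
  have c2: "\<bar>snd y * exp (- b * s)\<bar> \<le> R * exp (- b * T)"
    unfolding abs_mult using y e2 R by (intro mult_mono) auto
  have c3: "R * exp (- a * T) \<le> R * exp (- b * T)" using e3 R by (intro mult_left_mono) auto
  have "dist (0::real, 0::real) (fst y * exp (- a * s), snd y * exp (- b * s)) < eps"
    using dist_le_sum[of 0 0 "fst y * exp (- a * s)" "snd y * exp (- b * s)"] c1 c2 c3 eps by simp
  then show ?thesis unfolding A1_def using c1 c2 by (simp add: flow_simps abs_le_iff mem_ball)
qed

lemma prob1:
  fixes a b l0 l1 R T eps :: real and x :: "real \<times> real"
  assumes ab: "0 < b" "b < a" and l: "0 < l0" "0 < l1" and R: "1 \<le> R" and T: "0 \<le> T"
    and eps: "2 * R * exp (- b * T) < eps" and x: "x \<in> sbox R" and j: "j \<in> {0, 1}"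
  shows "ennreal ((1 - exp (- l1)) * exp (- l0) * exp (- l0 * T)) \<le>
    emeasure exp_seq {e \<in> space exp_seq. pdmp_state a b l0 l1 (T + 1) x j e \<in> A1 a b R T eps \<times> {0}}"
proof -
  have xb: "\<bar>fst x\<bar> \<le> R" "\<bar>snd x\<bar> \<le> R" using x by (auto simp: mem_box)
  have num: "(1 - exp (- l1)) * exp (- l0) * exp (- l0 * T) \<le> exp (- l0) * exp (- l0 * T)"
    using l by (intro mult_right_mono) auto
  have ex: "exp (- l0) * exp (- l0 * T) = exp (- (l0 * (T + 1)))" by (simp add: exp_add[symmetric] algebra_simps)
  show ?thesis
  proof (cases "j = 0")
    case True
    let ?E = "{e \<in> space exp_seq. \<forall>k\<in>{0::nat}. e k \<in> {l0 * (T + 1) <..}}"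
    have "emeasure exp_seq ?E = (\<Prod>k\<in>{0::nat}. emeasure D {l0 * (T + 1) <..})"
      by (rule exp_seq_event) auto
    also have "\<dots> = ennreal (exp (- (l0 * (T + 1))))" using l T by (simp add: D_gt)
    finally have m: "emeasure exp_seq ?E = ennreal (exp (- (l0 * (T + 1))))" .
    have sub: "?E \<subseteq> {e \<in> space exp_seq. pdmp_state a b l0 l1 (T + 1) x j e \<in> A1 a b R T eps \<times> {0}}"
    proof safe
      fix e assume e: "\<forall>k\<in>{0::nat}. e k \<in> {l0 * (T + 1) <..}"
      have h: "T + 1 < jump_time l0 l1 0 e (Suc 0)"
        using e l by (simp add: jump_time_Suc hold_def field_simps)
      have "pdmp_state a b l0 l1 (T + 1) x 0 e = (flow a b 0 (T + 1) x, 0)"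
        using pdmp_state_eq[of 0 l0 l1 0 e "T + 1" a b x] h by simp
      then show "pdmp_state a b l0 l1 (T + 1) x j e \<in> A1 a b R T eps \<times> {0}"
        using True geom1[OF ab xb T _ eps, of "T + 1"] by simp
    qed
    have "ennreal ((1 - exp (- l1)) * exp (- l0) * exp (- l0 * T)) \<le> emeasure exp_seq ?E"
      unfolding m by (intro ennreal_leI) (use num ex in linarith)
    also have "\<dots> \<le> emeasure exp_seq {e \<in> space exp_seq. pdmp_state a b l0 l1 (T + 1) x j e \<in> A1 a b R T eps \<times> {0}}"
      by (rule event_lb[OF A1_sets sub])
    finally show ?thesis .
  next
    case False
    then have j1: "j = 1" using j by auto
    define X where "X k = (if k = 0 then {0<..l1} else {l0 * (T + 1) <..})" for k :: nat
    let ?E = "{e \<in> space exp_seq. \<forall>k\<in>{0::nat, 1}. e k \<in> X k}"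
    have "emeasure exp_seq ?E = (\<Prod>k\<in>{0::nat, 1}. emeasure D (X k))"
      by (rule exp_seq_event) (auto simp: X_def)
    also have "\<dots> = ennreal (exp (- 0) - exp (- l1)) * ennreal (exp (- (l0 * (T + 1))))"
      using l T by (simp add: X_def D_gt D_Ioc)
    also have "\<dots> = ennreal ((1 - exp (- l1)) * exp (- (l0 * (T + 1))))"
      using l by (simp add: ennreal_mult)
    finally have m: "emeasure exp_seq ?E = ennreal ((1 - exp (- l1)) * exp (- (l0 * (T + 1))))" .
    have sub: "?E \<subseteq> {e \<in> space exp_seq. pdmp_state a b l0 l1 (T + 1) x j e \<in> A1 a b R T eps \<times> {0}}"
    proof safe
      fix e assume e: "\<forall>k\<in>{0::nat, 1}. e k \<in> X k"
      then have e0: "0 < e 0" "e 0 \<le> l1" and e1: "l0 * (T + 1) < e 1" by (auto simp: X_def)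
      define tau where "tau = e 0 / l1"
      have tau: "0 < tau" "tau \<le> 1" using e0 l by (auto simp: tau_def field_simps)
      have h1: "jump_time l0 l1 1 e (Suc 0) = tau" by (simp add: jump_time_Suc hold_def tau_def)
      have h2: "jump_time l0 l1 1 e (Suc 1) = tau + e 1 / l0" by (simp add: jump_time_Suc hold_def tau_def)
      have "T + 1 < e 1 / l0" using e1 l by (simp add: field_simps)
      then have h2': "T + 1 < jump_time l0 l1 1 e (Suc 1)" using h2 tau by simp
      have h1': "\<forall>m<1. jump_time l0 l1 1 e (Suc m) \<le> T + 1" using h1 tau T by auto
      have st: "pdmp_state a b l0 l1 (T + 1) x 1 e = (flow a b 0 (T + 1 - tau) (flow a b 1 tau x), 0)"
        using pdmp_state_eq[OF h1' h2', of a b x] h1 by (simp add: hold_def tau_def)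
      have th: "0 \<le> exp (- a * tau)" "exp (- a * tau) \<le> 1" "0 \<le> exp (- b * tau)" "exp (- b * tau) \<le> 1"
        using ab tau by auto
      have yb: "\<bar>fst (flow a b 1 tau x)\<bar> \<le> R" "\<bar>snd (flow a b 1 tau x)\<bar> \<le> R"
        using contract1[OF xb(1) R th(1,2)] contract1[OF xb(2) R th(3,4)] by (simp_all add: flow_simps)
      show "pdmp_state a b l0 l1 (T + 1) x j e \<in> A1 a b R T eps \<times> {0}"
        using j1 st geom1[OF ab yb T _ eps, of "T + 1 - tau"] tau by simp
    qed
    have "ennreal ((1 - exp (- l1)) * exp (- l0) * exp (- l0 * T)) \<le> emeasure exp_seq ?E"
      unfolding m using ex by (intro ennreal_leI) (simp add: mult.assoc)
    also have "\<dots> \<le> emeasure exp_seq {e \<in> space exp_seq. pdmp_state a b l0 l1 (T + 1) x j e \<in> A1 a b R T eps \<times> {0}}"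
      by (rule event_lb[OF A1_sets sub])
    finally show ?thesis .
  qed
qed

definition A2 :: "real \<Rightarrow> real \<Rightarrow> real \<Rightarrow> real \<Rightarrow> real \<Rightarrow> real \<Rightarrow> real \<Rightarrow> (real \<times> real) set" where
  "A2 a b R S dl t0 eps = strip (b / a) (2 * ((R + 1) * exp (- b * (S - dl))))
           \<inter> ball (exp (- a * t0), exp (- b * t0)) eps"

lemma A2_sets: "A2 a b R S dl t0 eps \<in> sets borel"
  unfolding A2_def by (intro sets.Int strip_sets) auto

definition c2 :: "real \<Rightarrow> real \<Rightarrow> real \<Rightarrow> real \<Rightarrow> real" where
  "c2 l0 l1 dl t0 = (exp (l1 * dl) - exp (l1 * dl / 2)) * (1 - exp (- (l0 * dl / 2))) * exp (- (l0 * (t0 + dl)))"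

lemma c2_pos: "0 < l0 \<Longrightarrow> 0 < l1 \<Longrightarrow> 0 < dl \<Longrightarrow> 0 < c2 l0 l1 dl t0"
  unfolding c2_def by (intro mult_pos_pos) auto

lemma prob2:
  fixes a b l0 l1 R S dl t0 eps :: real and x :: "real \<times> real"
  assumes ab: "0 < b" "b < a" and l: "0 < l0" "0 < l1" and R: "1 \<le> R"
    and dl: "0 < dl" and t0: "0 < t0" and S: "0 \<le> S - dl"
    and eta: "(R + 1) * exp (- b * (S - dl)) \<le> 1/2"
    and eta2: "(R + 1) * exp (- b * (S - dl)) < eps / 4" and dle: "a * dl \<le> eps / 4"
    and x: "x \<in> sbox R" and j: "j \<in> {0, 1}"
  shows "ennreal (c2 l0 l1 dl t0 * exp (- l1 * S)) \<le>
    emeasure exp_seq {e \<in> space exp_seq. pdmp_state a b l0 l1 (S + t0) x j e \<in> A2 a b R S dl t0 eps \<times> {0}}"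
proof -
  have xb: "\<bar>fst x\<bar> \<le> R" "\<bar>snd x\<bar> \<le> R" using x by (auto simp: mem_box)
  have E1: "exp (- (l1 * (S - dl))) = exp (- l1 * S) * exp (l1 * dl)"
    by (simp add: exp_add[symmetric] algebra_simps)
  have E2: "exp (- (l1 * (S - dl / 2))) = exp (- l1 * S) * exp (l1 * dl / 2)"
    by (simp add: exp_add[symmetric] algebra_simps)
  have E3: "exp (- (l1 * S)) = exp (- l1 * S) * 1" by simp
  show ?thesis
  proof (cases "j = 0")
    case True
    define X where "X k = (if k = 0 then {0<..l0 * dl / 2} else if k = 1 then {l1 * (S - dl) <.. l1 * (S - dl / 2)}
       else {l0 * (t0 + dl) <..})" for k :: nat
    let ?E = "{e \<in> space exp_seq. \<forall>k\<in>{0::nat, 1, 2}. e k \<in> X k}"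
    have "emeasure exp_seq ?E = (\<Prod>k\<in>{0::nat, 1, 2}. emeasure D (X k))"
      by (rule exp_seq_event) (auto simp: X_def)
    also have "\<dots> = ennreal (exp (- 0) - exp (- (l0 * dl / 2))) *
        (ennreal (exp (- (l1 * (S - dl))) - exp (- (l1 * (S - dl / 2)))) * ennreal (exp (- (l0 * (t0 + dl)))))"
      using l dl S t0 by (simp add: X_def D_gt D_Ioc mult_left_mono)
    also have "\<dots> = ennreal (c2 l0 l1 dl t0 * exp (- l1 * S))"
      unfolding E1 E2 c2_def using l dl
      by (simp add: ennreal_mult[symmetric] mult_nonneg_nonneg algebra_simps)
    finally have m: "emeasure exp_seq ?E = ennreal (c2 l0 l1 dl t0 * exp (- l1 * S))" .
    have sub: "?E \<subseteq> {e \<in> space exp_seq. pdmp_state a b l0 l1 (S + t0) x j e \<in> A2 a b R S dl t0 eps \<times> {0}}"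
    proof safe
      fix e assume e: "\<forall>k\<in>{0::nat, 1, 2}. e k \<in> X k"
      then have e0: "0 < e 0" "e 0 \<le> l0 * dl / 2" and e1: "l1 * (S - dl) < e 1" "e 1 \<le> l1 * (S - dl / 2)"
        and e2: "l0 * (t0 + dl) < e 2" by (auto simp: X_def)
      define t1 where "t1 = e 0 / l0"
      define d where "d = e 1 / l1"
      have t1: "0 < t1" "t1 \<le> dl / 2" using e0 l by (auto simp: t1_def field_simps)
      have d: "S - dl < d" "d \<le> S - dl / 2" using e1 l by (auto simp: d_def field_simps)
      have h0: "hold l0 l1 0 e 0 = t1" "hold l0 l1 0 e 1 = d" "hold l0 l1 0 e 2 = e 2 / l0"
        by (simp_all add: hold_def t1_def d_def mode_def)
      have j1: "jump_time l0 l1 0 e (Suc 0) = t1" by (simp add: jump_time_Suc h0)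
      have j2: "jump_time l0 l1 0 e (Suc 1) = t1 + d" using h0 by (simp add: jump_time_Suc)
      have j3: "jump_time l0 l1 0 e (Suc 2) = t1 + d + e 2 / l0"
        using h0 by (simp add: jump_time_Suc numeral_2_eq_2)
      have "t0 + dl < e 2 / l0" using e2 l by (simp add: field_simps)
      then have h3: "S + t0 < jump_time l0 l1 0 e (Suc 2)" using j3 t1 d by simp
      have h12: "\<forall>m<2. jump_time l0 l1 0 e (Suc m) \<le> S + t0"
      proof safe
        fix m :: nat assume "m < 2"
        then have "m = 0 \<or> m = 1" by auto
        then show "jump_time l0 l1 0 e (Suc m) \<le> S + t0" using j1 j2 t1 d t0 S by auto
      qed
      have jp: "jump_pos a b l0 l1 x 0 e 2 = flow a b 1 d (flow a b 0 t1 x)"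
        using h0 by (simp add: numeral_2_eq_2)
      have st: "pdmp_state a b l0 l1 (S + t0) x 0 e = (flow a b 0 (S + t0 - (t1 + d)) (flow a b 1 d (flow a b 0 t1 x)), 0)"
        using pdmp_state_eq[OF h12 h3, of a b x] j2 jp by (simp add: numeral_2_eq_2)
      have th: "0 \<le> exp (- a * t1)" "exp (- a * t1) \<le> 1" "0 \<le> exp (- b * t1)" "exp (- b * t1) \<le> 1"
        using ab t1 by auto
      have wb: "\<bar>fst (flow a b 0 t1 x)\<bar> \<le> R" "\<bar>snd (flow a b 0 t1 x)\<bar> \<le> R"
      proof -
        have "\<bar>fst x\<bar> * exp (- a * t1) \<le> R * 1" using xb th R by (intro mult_mono) auto
        moreover have "\<bar>snd x\<bar> * exp (- b * t1) \<le> R * 1" using xb th R by (intro mult_mono) auto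
        ultimately show "\<bar>fst (flow a b 0 t1 x)\<bar> \<le> R" "\<bar>snd (flow a b 0 t1 x)\<bar> \<le> R"
          by (simp_all add: flow_simps abs_mult)
      qed
      have "flow a b 0 (S + t0 - (t1 + d)) (flow a b 1 d (flow a b 0 t1 x)) \<in> A2 a b R S dl t0 eps"
        unfolding A2_def
        by (rule geom2[OF ab R wb _ S _ _ _ eta eta2 dle]) (use d t1 t0 in auto)
      then show "pdmp_state a b l0 l1 (S + t0) x j e \<in> A2 a b R S dl t0 eps \<times> {0}"
        using True st by simp
    qed
    show ?thesis unfolding m[symmetric] by (rule event_lb[OF A2_sets sub])
  next
    case False
    then have j1: "j = 1" using j by auto
    define X where "X k = (if k = 0 then {l1 * (S - dl) <.. l1 * S} else {l0 * (t0 + dl) <..})" for k :: nat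
    let ?E = "{e \<in> space exp_seq. \<forall>k\<in>{0::nat, 1}. e k \<in> X k}"
    have "emeasure exp_seq ?E = (\<Prod>k\<in>{0::nat, 1}. emeasure D (X k))"
      by (rule exp_seq_event) (auto simp: X_def)
    also have "\<dots> = ennreal (exp (- (l1 * (S - dl))) - exp (- (l1 * S))) * ennreal (exp (- (l0 * (t0 + dl))))"
      using l dl S t0 by (simp add: X_def D_gt D_Ioc mult_left_mono)
    finally have m: "emeasure exp_seq ?E = ennreal (exp (- (l1 * (S - dl))) - exp (- (l1 * S))) * ennreal (exp (- (l0 * (t0 + dl))))" .
    have num: "c2 l0 l1 dl t0 * exp (- l1 * S) \<le> (exp (- (l1 * (S - dl))) - exp (- (l1 * S))) * exp (- (l0 * (t0 + dl)))"
    proof -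
      have f1: "exp (l1 * dl) - exp (l1 * dl / 2) \<le> exp (l1 * dl) - 1" using l dl by simp
      have f2: "1 - exp (- (l0 * dl / 2)) \<le> 1" by simp
      have f3: "0 \<le> 1 - exp (- (l0 * dl / 2))" using l dl by simp
      have f4: "0 \<le> exp (l1 * dl) - exp (l1 * dl / 2)" using l dl by simp
      have "(exp (l1 * dl) - exp (l1 * dl / 2)) * (1 - exp (- (l0 * dl / 2))) \<le> (exp (l1 * dl) - 1) * 1"
        using f1 f2 f3 f4 by (intro mult_mono) auto
      then have "c2 l0 l1 dl t0 \<le> (exp (l1 * dl) - 1) * exp (- (l0 * (t0 + dl)))"
        unfolding c2_def by (intro mult_right_mono) auto
      then have "c2 l0 l1 dl t0 * exp (- l1 * S) \<le> (exp (l1 * dl) - 1) * exp (- (l0 * (t0 + dl))) * exp (- l1 * S)"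
        by (intro mult_right_mono) auto
      also have "\<dots> = (exp (- (l1 * (S - dl))) - exp (- (l1 * S))) * exp (- (l0 * (t0 + dl)))"
        unfolding E1 by (simp add: algebra_simps)
      finally show ?thesis .
    qed
    have sub: "?E \<subseteq> {e \<in> space exp_seq. pdmp_state a b l0 l1 (S + t0) x j e \<in> A2 a b R S dl t0 eps \<times> {0}}"
    proof safe
      fix e assume e: "\<forall>k\<in>{0::nat, 1}. e k \<in> X k"
      then have e0: "l1 * (S - dl) < e 0" "e 0 \<le> l1 * S" and e1: "l0 * (t0 + dl) < e 1" by (auto simp: X_def)
      define tau where "tau = e 0 / l1"
      have tau: "S - dl < tau" "tau \<le> S" using e0 l by (auto simp: tau_def field_simps)
      have h1: "jump_time l0 l1 1 e (Suc 0) = tau" by (simp add: jump_time_Suc hold_def tau_def)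
      have h2: "jump_time l0 l1 1 e (Suc 1) = tau + e 1 / l0" by (simp add: jump_time_Suc hold_def tau_def)
      have "t0 + dl < e 1 / l0" using e1 l by (simp add: field_simps)
      then have h2': "S + t0 < jump_time l0 l1 1 e (Suc 1)" using h2 tau by simp
      have h1': "\<forall>m<1. jump_time l0 l1 1 e (Suc m) \<le> S + t0" using h1 tau t0 by auto
      have st: "pdmp_state a b l0 l1 (S + t0) x 1 e = (flow a b 0 (S + t0 - tau) (flow a b 1 tau x), 0)"
        using pdmp_state_eq[OF h1' h2', of a b x] h1 by (simp add: hold_def tau_def)
      have "flow a b 0 (S + t0 - tau) (flow a b 1 tau x) \<in> A2 a b R S dl t0 eps"
        unfolding A2_def
        by (rule geom2[OF ab R xb _ S _ _ _ eta eta2 dle]) (use tau t0 in auto)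
      then show "pdmp_state a b l0 l1 (S + t0) x j e \<in> A2 a b R S dl t0 eps \<times> {0}"
        using j1 st by simp
    qed
    have "ennreal (c2 l0 l1 dl t0 * exp (- l1 * S)) \<le> emeasure exp_seq ?E"
    proof -
      have nn: "0 \<le> exp (- (l1 * (S - dl))) - exp (- (l1 * S))" using l dl by simp
      have "ennreal (exp (- (l1 * (S - dl))) - exp (- (l1 * S))) * ennreal (exp (- (l0 * (t0 + dl))))
          = ennreal ((exp (- (l1 * (S - dl))) - exp (- (l1 * S))) * exp (- (l0 * (t0 + dl))))"
        using nn by (simp add: ennreal_mult)
      then show ?thesis unfolding m using num by (simp add: ennreal_leI)
    qed
    also have "\<dots> \<le> emeasure exp_seq {e \<in> space exp_seq. pdmp_state a b l0 l1 (S + t0) x j e \<in> A2 a b R S dl t0 eps \<times> {0}}"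
      by (rule event_lb[OF A2_sets sub])
    finally show ?thesis .
  qed
qed

lemma exp_small:
  fixes b e :: real assumes "0 < b" "0 < e"
  shows "\<exists>T0. \<forall>T\<ge>T0. exp (- b * T) < e"
proof (intro exI allI impI)
  fix T assume T: "(1 - ln e) / b \<le> T"
  have "1 - ln e \<le> T * b" using T assms by (simp add: pos_divide_le_eq)
  then have "- b * T \<le> ln e - 1" by (simp add: algebra_simps)
  then have "exp (- b * T) \<le> exp (ln e - 1)" by simp
  also have "\<dots> = e / exp 1" using assms by (simp add: exp_diff)
  also have "\<dots> < e" using assms by (simp add: field_simps)
  finally show "exp (- b * T) < e" .
qed

lemma final_contra:
  fixes d k K l T0 :: real
  assumes d: "0 < d" and k: "0 < k" and H: "\<forall>T\<ge>T0. k * exp (- l * T) \<le> K * exp (- (l + d) * T)"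
  shows False
proof -
  define T where "T = max T0 (\<bar>K / k\<bar> / d)"
  have "\<bar>K / k\<bar> / d \<le> T" unfolding T_def by simp
  then have "d * (\<bar>K / k\<bar> / d) \<le> d * T" using d by (intro mult_left_mono) auto
  then have "\<bar>K / k\<bar> \<le> d * T" using d by simp
  also have "d * T < exp (d * T)" using exp_ge_add_one_self[of "d * T"] by linarith
  finally have "K / k < exp (d * T)" by (metis abs_ge_self le_less_trans)
  then have "K < k * exp (d * T)" using k by (simp add: field_simps)
  then have "K * exp (- (l + d) * T) < k * exp (d * T) * exp (- (l + d) * T)"
    by (intro mult_strict_right_mono) auto
  also have "\<dots> = k * exp (- l * T)" by (simp add: mult.assoc exp_add[symmetric] algebra_simps)
  finally have lt: "K * exp (- (l + d) * T) < k * exp (- l * T)" .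
  have "T0 \<le> T" unfolding T_def by simp
  then have "k * exp (- l * T) \<le> K * exp (- (l + d) * T)" using H by blast
  then show False using lt by linarith
qed

lemma box_rect_sets: fixes p q :: real shows "{- p .. p} \<times> {- q .. q} \<in> sets borel"
proof -
  have "{- p .. p} \<times> {- q .. q} \<in> sets (borel \<Otimes>\<^sub>M (borel :: real measure))" by (rule pair_measureI) (auto intro!: borel_closed)
  then show ?thesis by (simp only: borel_prod)
qed

lemma part1:
  fixes a b l0 l1 :: real
  assumes ab: "0 < b" "b < a" and l: "0 < l0" "0 < l1" and inv: "invariant_densities a b l0 l1 \<rho>\<^sub>0 \<rho>\<^sub>1"
    and ll: "l0 < a + b"
  shows "unbounded_near \<rho>\<^sub>0 (0, 0)"
  unfolding unbounded_near_def
proof (intro allI impI notI)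
  fix U :: "(real \<times> real) set" assume U: "open U" "(0, 0) \<in> U"
  assume "\<exists>C. AE y in lborel. y \<in> U \<longrightarrow> \<bar>\<rho>\<^sub>0 y\<bar> \<le> C"
  then obtain C0 where C0: "AE y in lborel. y \<in> U \<longrightarrow> \<bar>\<rho>\<^sub>0 y\<bar> \<le> C0" by blast
  define C where "C = max C0 0"
  have C: "AE y in lborel. y \<in> U \<longrightarrow> \<bar>\<rho>\<^sub>0 y\<bar> \<le> C" using C0 by eventually_elim (auto simp: C_def)
  have C_nn: "0 \<le> C" by (simp add: C_def)
  obtain eps where eps: "0 < eps" "ball (0, 0) eps \<subseteq> U" using U open_contains_ball by blast
  obtain R where R: "1 \<le> R" and M: "0 < (\<integral>\<^sup>+x. ennreal (\<rho>\<^sub>0 x + \<rho>\<^sub>1 x) * indicator (sbox R) x \<partial>lborel)"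
     "(\<integral>\<^sup>+x. ennreal (\<rho>\<^sub>0 x + \<rho>\<^sub>1 x) * indicator (sbox R) x \<partial>lborel) \<le> 1"
    using pos_mass[OF inv] by blast
  define Mi where "Mi = (\<integral>\<^sup>+x. ennreal (\<rho>\<^sub>0 x + \<rho>\<^sub>1 x) * indicator (sbox R) x \<partial>lborel)"
  define m where "m = enn2real Mi"
  have fin: "Mi < top" using M(2) unfolding Mi_def
    by (metis ennreal_1 ennreal_less_top le_less_trans)
  have Mi: "Mi = ennreal m" unfolding m_def using fin by simp
  have m: "0 < m" unfolding m_def using fin M(1) unfolding Mi_def by (simp add: enn2real_positive_iff)
  obtain T0 where T0: "\<forall>T\<ge>T0. exp (- b * T) < eps / (2 * R)"
    using exp_small[OF ab(1), of "eps / (2 * R)"] eps R by auto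
  define k0 where "k0 = (1 - exp (- l1)) * exp (- l0)"
  have k0: "0 < k0" using l by (simp add: k0_def)
  have H: "k0 * m * exp (- l0 * T) \<le> (C * (2 * R * (2 * R))) * exp (- (l0 + (a + b - l0)) * T)"
    if T: "max T0 0 \<le> T" for T
  proof -
    have T': "0 \<le> T" "T0 \<le> T" using T by auto
    have epsT: "2 * R * exp (- b * T) < eps"
      using T0 T' R by (simp add: field_simps)
    define A where "A = A1 a b R T eps"
    have low: "ennreal ((1 - exp (- l1)) * exp (- l0) * exp (- l0 * T)) * Mi
        \<le> (\<integral>\<^sup>+x. ennreal (\<rho>\<^sub>0 x) * indicator A x \<partial>lborel)"
      unfolding Mi_def A_def
      by (rule lower_bound[OF inv _ A1_sets box_sets _ prob1[OF ab l R T'(1) epsT]]) (use T' l in auto)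
    have sub: "A \<subseteq> U" "A \<subseteq> {- (R * exp (- a * T)) .. R * exp (- a * T)} \<times> {- (R * exp (- b * T)) .. R * exp (- b * T)}"
      using eps unfolding A_def A1_def by auto
    have up: "(\<integral>\<^sup>+x. ennreal (\<rho>\<^sub>0 x) * indicator A x \<partial>lborel)
       \<le> ennreal C * emeasure lborel ({- (R * exp (- a * T)) .. R * exp (- a * T)} \<times> {- (R * exp (- b * T)) .. R * exp (- b * T)})"
      by (rule upper_bound[OF C sub box_rect_sets C_nn])
    also have "\<dots> = ennreal C * ennreal (2 * (R * exp (- a * T)) * (2 * (R * exp (- b * T))))"
      using R by (subst emeasure_box2) auto
    finally have up': "(\<integral>\<^sup>+x. ennreal (\<rho>\<^sub>0 x) * indicator A x \<partial>lborel) \<le> ennreal C * ennreal (2 * (R * exp (- a * T)) * (2 * (R * exp (- b * T))))" .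
    define X where "X = (1 - exp (- l1)) * exp (- l0) * exp (- l0 * T)"
    define V where "V = 2 * (R * exp (- a * T)) * (2 * (R * exp (- b * T)))"
    have nn: "0 \<le> X" unfolding X_def using l by (intro mult_nonneg_nonneg) auto
    have nV: "0 \<le> V" unfolding V_def using R by simp
    have e1: "ennreal X * ennreal m = ennreal (X * m)" by (rule ennreal_mult[symmetric]) (use nn m in auto)
    have e2: "ennreal C * ennreal V = ennreal (C * V)" by (rule ennreal_mult[symmetric]) (use C_nn nV in auto)
    have "ennreal (X * m) \<le> ennreal (C * V)"
      using low up' e1 e2 unfolding Mi X_def[symmetric] V_def[symmetric] by (metis order_trans)
    then have "X * m \<le> C * V" using C_nn nV by (subst (asm) ennreal_le_iff) auto
    then have "k0 * exp (- l0 * T) * m \<le> C * (2 * (R * exp (- a * T)) * (2 * (R * exp (- b * T))))"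
      unfolding X_def V_def k0_def by simp
    moreover have "exp (- a * T) * exp (- b * T) = exp (- (l0 + (a + b - l0)) * T)"
      by (simp add: exp_add[symmetric] algebra_simps)
    ultimately show ?thesis by (simp add: algebra_simps)
  qed
  have H': "\<forall>T\<ge>max T0 0. (k0 * m) * exp (- l0 * T) \<le> (C * (2 * R * (2 * R))) * exp (- (l0 + (a + b - l0)) * T)"
    using H by blast
  show False by (rule final_contra[OF _ _ H']) (use ll k0 m in auto)
qed

lemma part2:
  fixes a b l0 l1 t0 :: real
  assumes ab: "0 < b" "b < a" and l: "0 < l0" "0 < l1" and inv: "invariant_densities a b l0 l1 \<rho>\<^sub>0 \<rho>\<^sub>1"
    and ll: "l1 < b" and t0: "0 < t0"
  shows "unbounded_near \<rho>\<^sub>0 (exp (- a * t0), exp (- b * t0))"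
  unfolding unbounded_near_def
proof (intro allI impI notI)
  fix U :: "(real \<times> real) set" assume U: "open U" "(exp (- a * t0), exp (- b * t0)) \<in> U"
  assume "\<exists>C. AE y in lborel. y \<in> U \<longrightarrow> \<bar>\<rho>\<^sub>0 y\<bar> \<le> C"
  then obtain C0 where C0: "AE y in lborel. y \<in> U \<longrightarrow> \<bar>\<rho>\<^sub>0 y\<bar> \<le> C0" by blast
  define C where "C = max C0 0"
  have C: "AE y in lborel. y \<in> U \<longrightarrow> \<bar>\<rho>\<^sub>0 y\<bar> \<le> C" using C0 by eventually_elim (auto simp: C_def)
  have C_nn: "0 \<le> C" by (simp add: C_def)
  obtain eps where eps: "0 < eps" "ball (exp (- a * t0), exp (- b * t0)) eps \<subseteq> U"
    using U open_contains_ball by blast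
  obtain R where R: "1 \<le> R" and M: "0 < (\<integral>\<^sup>+x. ennreal (\<rho>\<^sub>0 x + \<rho>\<^sub>1 x) * indicator (sbox R) x \<partial>lborel)"
     "(\<integral>\<^sup>+x. ennreal (\<rho>\<^sub>0 x + \<rho>\<^sub>1 x) * indicator (sbox R) x \<partial>lborel) \<le> 1"
    using pos_mass[OF inv] by blast
  define Mi where "Mi = (\<integral>\<^sup>+x. ennreal (\<rho>\<^sub>0 x + \<rho>\<^sub>1 x) * indicator (sbox R) x \<partial>lborel)"
  define m where "m = enn2real Mi"
  have fin: "Mi < top" using M(2) unfolding Mi_def
    by (metis ennreal_1 ennreal_less_top le_less_trans)
  have Mi: "Mi = ennreal m" unfolding m_def using fin by simp
  have m: "0 < m" unfolding m_def using fin M(1) unfolding Mi_def by (simp add: enn2real_positive_iff)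
  define dl where "dl = eps / (4 * a)"
  have dl: "0 < dl" "a * dl \<le> eps / 4" using eps ab by (auto simp: dl_def)
  define e' where "e' = min (1/2) (eps / 8) / (R + 1)"
  have e': "0 < e'" using eps R by (simp add: e'_def)
  obtain T0 where T0: "\<forall>T\<ge>T0. exp (- b * T) < e'" using exp_small[OF ab(1) e'] by blast
  define c where "c = c2 l0 l1 dl t0"
  have c: "0 < c" unfolding c_def using c2_pos l dl by blast
  define K where "K = C * (8 * ((R + 1) * exp (b * dl)))"
  have H: "(c * m) * exp (- l1 * S) \<le> K * exp (- (l1 + (b - l1)) * S)"
    if S: "max (T0 + dl) dl \<le> S" for S
  proof -
    have S': "0 \<le> S - dl" "T0 \<le> S - dl" using S by auto
    have et: "exp (- b * (S - dl)) < e'" using T0 S' by blast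
    have "(R + 1) * exp (- b * (S - dl)) < (R + 1) * e'" using et R by simp
    also have "\<dots> = min (1/2) (eps / 8)" unfolding e'_def using R by simp
    finally have eta_lt: "(R + 1) * exp (- b * (S - dl)) < min (1/2) (eps / 8)" .
    then have eta: "(R + 1) * exp (- b * (S - dl)) \<le> 1/2" and eta2: "(R + 1) * exp (- b * (S - dl)) < eps / 4"
      using eps by auto
    define A where "A = A2 a b R S dl t0 eps"
    define w where "w = 2 * ((R + 1) * exp (- b * (S - dl)))"
    have w: "0 \<le> w" unfolding w_def using R by simp
    have low: "ennreal (c * exp (- l1 * S)) * Mi \<le> (\<integral>\<^sup>+x. ennreal (\<rho>\<^sub>0 x) * indicator A x \<partial>lborel)"
      unfolding Mi_def A_def c_def
      by (rule lower_bound[OF inv _ A2_sets box_sets _ prob2[OF ab l R dl(1) t0 S'(1) eta eta2 dl(2)]])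
        (use S' t0 c c_def dl(1) in auto)
    have sub: "A \<subseteq> U" "A \<subseteq> strip (b / a) w"
      using eps unfolding A_def A2_def w_def by auto
    have "(\<integral>\<^sup>+x. ennreal (\<rho>\<^sub>0 x) * indicator A x \<partial>lborel) \<le> ennreal C * emeasure lborel (strip (b / a) w)"
      by (rule upper_bound[OF C sub strip_sets C_nn])
    also have "\<dots> \<le> ennreal C * ennreal (4 * w)"
      by (intro mult_left_mono emeasure_strip w) simp
    finally have up': "(\<integral>\<^sup>+x. ennreal (\<rho>\<^sub>0 x) * indicator A x \<partial>lborel) \<le> ennreal C * ennreal (4 * w)" .
    define X where "X = c * exp (- l1 * S)"
    define V where "V = 4 * w"
    have nn: "0 \<le> X" unfolding X_def using c by simp
    have nV: "0 \<le> V" unfolding V_def using w by simp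
    have e1: "ennreal X * ennreal m = ennreal (X * m)" by (rule ennreal_mult[symmetric]) (use nn m in auto)
    have e2: "ennreal C * ennreal V = ennreal (C * V)" by (rule ennreal_mult[symmetric]) (use C_nn nV in auto)
    have "ennreal (X * m) \<le> ennreal (C * V)"
      using low up' e1 e2 unfolding Mi X_def[symmetric] V_def[symmetric] by (metis order_trans)
    then have "X * m \<le> C * V" using C_nn nV by (subst (asm) ennreal_le_iff) auto
    moreover have "exp (- b * (S - dl)) = exp (b * dl) * exp (- (l1 + (b - l1)) * S)"
      by (simp add: exp_add[symmetric] algebra_simps)
    ultimately show ?thesis unfolding X_def V_def w_def K_def by (simp add: algebra_simps)
  qed
  have H': "\<forall>S\<ge>max (T0 + dl) dl. (c * m) * exp (- l1 * S) \<le> K * exp (- (l1 + (b - l1)) * S)"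
    using H by blast
  show False by (rule final_contra[OF _ _ H']) (use ll c m in auto)
qed

theorem theorem3p2:
  fixes \<alpha> \<beta> l0 l1 :: real and \<rho>\<^sub>0 \<rho>\<^sub>1 :: "real \<times> real \<Rightarrow> real"
  assumes "0 < \<beta>" and "\<beta> < \<alpha>" and "0 < l0" and "0 < l1"
    and "invariant_densities \<alpha> \<beta> l0 l1 \<rho>\<^sub>0 \<rho>\<^sub>1"
  shows "(l0 < \<alpha> + \<beta> \<longrightarrow> unbounded_near \<rho>\<^sub>0 (0, 0))
       \<and> (l1 < \<beta> \<longrightarrow> (\<forall>x\<in>boundary_Gamma0 \<alpha> \<beta>. unbounded_near \<rho>\<^sub>0 x)
                        \<and> unbounded_near \<rho>\<^sub>0 (0, 0) \<and> unbounded_near \<rho>\<^sub>0 (1, 1))"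
proof (intro conjI impI)
  show "unbounded_near \<rho>\<^sub>0 (0, 0)" if "l0 < \<alpha> + \<beta>"
    by (rule part1[OF assms that])
next
  assume ll: "l1 < \<beta>"
  have P: "unbounded_near \<rho>\<^sub>0 (exp (- \<alpha> * t), exp (- \<beta> * t))" if "0 < t" for t
    by (rule part2[OF assms ll that])
  show "\<forall>x\<in>boundary_Gamma0 \<alpha> \<beta>. unbounded_near \<rho>\<^sub>0 x"
    unfolding boundary_Gamma0_def using P by (auto simp: flow_simps)
  show "unbounded_near \<rho>\<^sub>0 (0, 0)"
    unfolding unbounded_near_def
  proof (intro allI impI)
    fix U :: "(real \<times> real) set" assume U: "open U" "(0, 0) \<in> U"
    obtain eps where eps: "0 < eps" "ball (0, 0) eps \<subseteq> U" using U open_contains_ball by blast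
    obtain T0 where T0: "\<forall>T\<ge>T0. exp (- \<beta> * T) < eps / 2" using exp_small[OF assms(1), of "eps / 2"] eps by auto
    define t where "t = max T0 1"
    have t: "0 < t" "exp (- \<beta> * t) < eps / 2" using T0 by (auto simp: t_def)
    have ee: "exp (- \<alpha> * t) \<le> exp (- \<beta> * t)" using t assms mult_right_mono[of \<beta> \<alpha> t] by simp
    have "dist (0::real, 0::real) (exp (- \<alpha> * t), exp (- \<beta> * t)) \<le> exp (- \<alpha> * t) + exp (- \<beta> * t)"
      using dist_le_sum[of 0 0 "exp (- \<alpha> * t)" "exp (- \<beta> * t)"] by simp
    then have "dist (0::real, 0::real) (exp (- \<alpha> * t), exp (- \<beta> * t)) < eps"
      using ee t(2) by linarith
    then have "(exp (- \<alpha> * t), exp (- \<beta> * t)) \<in> U" using eps by auto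
    then show "\<not> (\<exists>C. AE y in lborel. y \<in> U \<longrightarrow> \<bar>\<rho>\<^sub>0 y\<bar> \<le> C)"
      using P[OF t(1)] U unfolding unbounded_near_def by blast
  qed
  show "unbounded_near \<rho>\<^sub>0 (1, 1)"
    unfolding unbounded_near_def
  proof (intro allI impI)
    fix U :: "(real \<times> real) set" assume U: "open U" "(1, 1) \<in> U"
    obtain eps where eps: "0 < eps" "ball (1, 1) eps \<subseteq> U" using U open_contains_ball by blast
    define t where "t = eps / (4 * \<alpha>)"
    have t: "0 < t" using eps assms by (simp add: t_def)
    have d1: "\<bar>1 - exp (- \<alpha> * t)\<bar> \<le> \<alpha> * t"
      using exp_diff_le[of \<alpha> 0 t] t assms by (simp add: abs_minus_commute)
    have d2: "\<bar>1 - exp (- \<beta> * t)\<bar> \<le> \<beta> * t"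
      using exp_diff_le[of \<beta> 0 t] t assms by (simp add: abs_minus_commute)
    have "\<beta> * t \<le> \<alpha> * t" using t assms by (intro mult_right_mono) auto
    moreover have "\<alpha> * t = eps / 4" using assms by (simp add: t_def)
    ultimately have "dist (1::real, 1::real) (exp (- \<alpha> * t), exp (- \<beta> * t)) < eps"
      using dist_le_sum[of 1 1 "exp (- \<alpha> * t)" "exp (- \<beta> * t)"] d1 d2 eps by linarith
    then have "(exp (- \<alpha> * t), exp (- \<beta> * t)) \<in> U" using eps by auto
    then show "\<not> (\<exists>C. AE y in lborel. y \<in> U \<longrightarrow> \<bar>\<rho>\<^sub>0 y\<bar> \<le> C)"
      using P[OF t] U unfolding unbounded_near_def by blast
  qed
qed

end
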